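(* Let $H=(Q,\pi,f_0,f_1)$ be a two-state HMM parameter with stationary hidden chain, satisfying Assumption A1, and let $f_\pi=\pi_0f_0+\pi_1f_1$. Then for any $a>1+\nu^{-1}$, $$\Pi_H\Big(\max_{i\le R}1/f_\pi(X_i)>R^a\Big)\to0\quad\text{as }R\to\infty.$$
   Context: $\mu$ is Lebesgue measure on $\mathbb R$ or counting measure on $\mathbb Z$. Under $\Pi_H$, $(\theta_n)_{n\ge1}$ is a Markov chain on $\{0,1\}$ with transition matrix $Q$ and initial law $\pi$ equal to its invariant distribution, and given $\theta$ the $X_n$ are independent with $\mu$-densities $f_{\theta_n}$; so each $X_i$ has density $f_\pi$. Assumption A1: (i) there is $\nu>0$ with $\max_{j=0,1}E_{X\sim f_j}|X|^\nu<\infty$; (ii) there is $x^*\in\mathbb R\cup\{\pm\infty\}$ with $f_1(x)/f_0(x)\to\infty$ as $x\uparrow x^*$ or as $x\downarrow x^*$ (conventions $1/0=\infty$, $0/0=0$). *)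

theory Defs
  imports "HOL-Probability.Probability"
begin

text \<open>Reference measure: Lebesgue measure on the reals (disc = False) or counting
  measure on the integers, viewed as a measure on the Borel sets of the reals (disc = True).\<close>

definition zcount :: "real measure" where
  "zcount = distr (count_space (UNIV :: int set)) borel real_of_int"

definition base_measure :: "bool \<Rightarrow> real measure" where
  "base_measure disc = (if disc then zcount else lborel)"

definition base_set :: "bool \<Rightarrow> real set" where
  "base_set disc = (if disc then \<int> else UNIV)"

definition is_density :: "real measure \<Rightarrow> (real \<Rightarrow> real) \<Rightarrow> bool" where
  "is_density \<mu> g \<longleftrightarrow> g \<in> borel_measurable borel \<and> (\<forall>x. 0 \<le> g x)
      \<and> (\<integral>\<^sup>+ x. ennreal (g x) \<partial>\<mu>) = 1"

definition stoch2 :: "(nat \<Rightarrow> nat \<Rightarrow> real) \<Rightarrow> bool" where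
  "stoch2 Q \<longleftrightarrow> (\<forall>i\<in>{0,1}. \<forall>j\<in>{0,1}. 0 \<le> Q i j) \<and> (\<forall>i\<in>{0,1}. Q i 0 + Q i 1 = 1)"

definition invariant2 :: "(nat \<Rightarrow> nat \<Rightarrow> real) \<Rightarrow> (nat \<Rightarrow> real) \<Rightarrow> bool" where
  "invariant2 Q p \<longleftrightarrow> 0 \<le> p 0 \<and> 0 \<le> p 1 \<and> p 0 + p 1 = 1
      \<and> (\<forall>j\<in>{0,1}. p j = p 0 * Q 0 j + p 1 * Q 1 j)"

text \<open>The law \<Pi>_H of the HMM: theta_1, theta_2, ... is a Markov chain on {0,1} with
  transition matrix Q and initial law p; given theta, the X_n are independent with
  densities f (theta_n).\<close>

definition hmm_law ::
  "'w measure \<Rightarrow> real measure \<Rightarrow> (nat \<Rightarrow> nat \<Rightarrow> real) \<Rightarrow> (nat \<Rightarrow> real)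
     \<Rightarrow> (nat \<Rightarrow> real \<Rightarrow> real) \<Rightarrow> (nat \<Rightarrow> 'w \<Rightarrow> nat) \<Rightarrow> (nat \<Rightarrow> 'w \<Rightarrow> real) \<Rightarrow> bool" where
  "hmm_law M \<mu> Q p f \<theta> X \<longleftrightarrow>
     prob_space M
     \<and> (\<forall>n. \<theta> n \<in> measurable M (count_space UNIV))
     \<and> (\<forall>n. X n \<in> borel_measurable M)
     \<and> (\<forall>n\<ge>1. \<forall>s A. (\<forall>i\<in>{1..n}. s i \<in> {0,1} \<and> A i \<in> sets borel) \<longrightarrow>
          measure M {\<omega> \<in> space M. \<forall>i\<in>{1..n}. \<theta> i \<omega> = s i \<and> X i \<omega> \<in> A i}
          = p (s 1) * (\<Prod>i\<in>{1..<n}. Q (s i) (s (Suc i)))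
              * (\<Prod>i\<in>{1..n}. (LINT x:A i|\<mu>. f (s i) x)))"

definition lr_ratio :: "(real \<Rightarrow> real) \<Rightarrow> (real \<Rightarrow> real) \<Rightarrow> real \<Rightarrow> ereal" where
  "lr_ratio f0 f1 x = (if f0 x = 0 then (if f1 x = 0 then 0 else \<infinity>) else ereal (f1 x / f0 x))"

text \<open>Assumption A1 (ii): f1/f0 \<rightarrow> \<infinity> as x increases to x* or decreases to x*,
  for some x* in the extended reals, x ranging over the support of the reference measure.\<close>

definition A1_ii :: "bool \<Rightarrow> (real \<Rightarrow> real) \<Rightarrow> (real \<Rightarrow> real) \<Rightarrow> bool" where
  "A1_ii disc f0 f1 \<longleftrightarrow>
     (\<exists>F. F \<noteq> bot \<and> (lr_ratio f0 f1 \<longlongrightarrow> \<infinity>) F \<and>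
        ((\<exists>xs. F = at xs within ({..<xs} \<inter> base_set disc))
       \<or> (\<exists>xs. F = at xs within ({xs<..} \<inter> base_set disc))
       \<or> F = inf at_top (principal (base_set disc))
       \<or> F = inf at_bot (principal (base_set disc))))"

end

theory Submission
  imports Defs
begin


definition Sf :: "nat \<Rightarrow> (nat \<Rightarrow> nat) set" where
  "Sf n = {s. \<forall>i. (i \<in> {1..n} \<longrightarrow> s i \<in> {0,1}) \<and> (i \<notin> {1..n} \<longrightarrow> s i = 0)}"

definition wt :: "(nat \<Rightarrow> nat \<Rightarrow> real) \<Rightarrow> (nat \<Rightarrow> real) \<Rightarrow> nat \<Rightarrow> (nat \<Rightarrow> nat) \<Rightarrow> real" where
  "wt Q p n s = p (s 1) * (\<Prod>i\<in>{1..<n}. Q (s i) (s (Suc i)))"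

lemma SfD1: "s \<in> Sf n \<Longrightarrow> i \<in> {1..n} \<Longrightarrow> s i \<in> {0,1}"
  unfolding Sf_def by blast
lemma SfD2: "s \<in> Sf n \<Longrightarrow> i \<notin> {1..n} \<Longrightarrow> s i = 0"
  unfolding Sf_def by blast
lemma SfI: "(\<And>i. i \<in> {1..n} \<Longrightarrow> s i \<in> {0,1}) \<Longrightarrow> (\<And>i. i \<notin> {1..n} \<Longrightarrow> s i = 0) \<Longrightarrow> s \<in> Sf n"
  unfolding Sf_def by blast
lemma Sf_restrict: "s \<in> Sf (Suc n) \<Longrightarrow> s(Suc n := 0) \<in> Sf n"
proof (rule SfI)
  fix i assume "s \<in> Sf (Suc n)" "i \<in> {1..n}" then show "(s(Suc n := 0)) i \<in> {0,1}"
    using SfD1[of s "Suc n" i] by simp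
next
  fix i assume "s \<in> Sf (Suc n)" "i \<notin> {1..n}" then show "(s(Suc n := 0)) i = 0"
    using SfD2[of s "Suc n" i] by (cases "i = Suc n") auto
qed
lemma Sf_extend: "s \<in> Sf n \<Longrightarrow> j \<in> {0,1} \<Longrightarrow> s(Suc n := j) \<in> Sf (Suc n)"
proof (rule SfI)
  fix i assume "s \<in> Sf n" "j \<in> {0,1}" "i \<in> {1..Suc n}" then show "(s(Suc n := j)) i \<in> {0,1}"
    using SfD1[of s n i] by (cases "i = Suc n") auto
next
  fix i assume "s \<in> Sf n" "i \<notin> {1..Suc n}" then show "(s(Suc n := j)) i = 0"
    using SfD2[of s n i] by auto
qed
lemma Sf_last0: "s \<in> Sf n \<Longrightarrow> s (Suc n) = 0"
  using SfD2[of s n "Suc n"] by simp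

lemma finite_Sf: "finite (Sf n)"
  unfolding Sf_def by (rule finite_set_of_finite_funs) auto

lemma Sf_split:
  assumes "n \<ge> 1"
  shows "(\<Sum>s\<in>Sf n. g s) = (\<Sum>s\<in>{s\<in>Sf n. s n = 0}. g s) + (\<Sum>s\<in>{s\<in>Sf n. s n = 1}. g s)"
proof -
  have "Sf n = {s\<in>Sf n. s n = 0} \<union> {s\<in>Sf n. s n = 1}"
    using assms SfD1[of _ n n] by auto
  then have "(\<Sum>s\<in>Sf n. g s) = (\<Sum>s\<in>{s\<in>Sf n. s n = 0} \<union> {s\<in>Sf n. s n = 1}. g s)" by simp
  also have "\<dots> = (\<Sum>s\<in>{s\<in>Sf n. s n = 0}. g s) + (\<Sum>s\<in>{s\<in>Sf n. s n = 1}. g s)"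
    by (rule sum.union_disjoint) (auto intro: finite_subset[OF _ finite_Sf])
  finally show ?thesis .
qed

lemma chain0: "(\<Sum>s\<in>{(\<lambda>i. if i = 1 then j else 0)}. wt Q p 1 s) = p j"
  by (simp add: wt_def)

lemma chain:
  assumes p: "invariant2 Q p"
  shows "n \<ge> 1 \<Longrightarrow> j \<in> {0,1} \<Longrightarrow> (\<Sum>s\<in>{s\<in>Sf n. s n = j}. wt Q p n s) = p j"
proof (induction n arbitrary: j rule: dec_induct)
  case base
  have e: "{s\<in>Sf 1. s 1 = j} = {(\<lambda>i. if i = 1 then j else 0)}"
    using base by (auto simp: Sf_def)
  show ?case
    apply (subst e)
    apply (rule chain0[where j=j and Q=Q and p=p])
    done
next
  case (step n)
  let ?u = "\<lambda>s. s(Suc n := j)"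
  have img: "{s\<in>Sf (Suc n). s (Suc n) = j} = ?u ` Sf n"
  proof (rule equalityI)
    show "{s\<in>Sf (Suc n). s (Suc n) = j} \<subseteq> ?u ` Sf n"
    proof (rule subsetI)
      fix s assume s: "s \<in> {s\<in>Sf (Suc n). s (Suc n) = j}"
      then have sS: "s \<in> Sf (Suc n)" and sj: "s (Suc n) = j" by auto
      have "s(Suc n := 0) \<in> Sf n" using sS by (rule Sf_restrict)
      moreover have "s = ?u (s(Suc n := 0))" using sj by (simp add: fun_upd_idem)
      ultimately show "s \<in> ?u ` Sf n" by blast
    qed
    show "?u ` Sf n \<subseteq> {s\<in>Sf (Suc n). s (Suc n) = j}"
      using step.prems Sf_extend Sf_last0 by auto
  qed
  have inj: "inj_on ?u (Sf n)"
  proof (rule inj_onI)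
    fix s t assume "s \<in> Sf n" "t \<in> Sf n" "?u s = ?u t"
    then show "s = t" using Sf_last0[of s n] Sf_last0[of t n] by (metis fun_upd_triv fun_upd_upd)
  qed
  have wstep: "wt Q p (Suc n) (?u s) = wt Q p n s * Q (s n) j" if "s \<in> Sf n" for s
  proof -
    have "(\<Prod>i\<in>{1..<Suc n}. Q (?u s i) (?u s (Suc i))) = (\<Prod>i\<in>{1..<n}. Q (?u s i) (?u s (Suc i))) * Q (?u s n) (?u s (Suc n))"
      using step.hyps by (simp add: prod.atLeastLessThan_Suc)
    also have "(\<Prod>i\<in>{1..<n}. Q (?u s i) (?u s (Suc i))) = (\<Prod>i\<in>{1..<n}. Q (s i) (s (Suc i)))"
      by (rule prod.cong) auto
    finally show ?thesis using step.hyps by (simp add: wt_def)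
  qed
  have "(\<Sum>s\<in>{s\<in>Sf (Suc n). s (Suc n) = j}. wt Q p (Suc n) s) = (\<Sum>s\<in>Sf n. wt Q p (Suc n) (?u s))"
    unfolding img by (rule sum.reindex[OF inj, unfolded comp_def])
  also have "\<dots> = (\<Sum>s\<in>Sf n. wt Q p n s * Q (s n) j)"
    by (rule sum.cong) (auto simp: wstep)
  also have "\<dots> = (\<Sum>s\<in>{s\<in>Sf n. s n = 0}. wt Q p n s * Q (s n) j) + (\<Sum>s\<in>{s\<in>Sf n. s n = 1}. wt Q p n s * Q (s n) j)"
    by (rule Sf_split) (use step.hyps in auto)
  also have "\<dots> = (\<Sum>s\<in>{s\<in>Sf n. s n = 0}. wt Q p n s) * Q 0 j + (\<Sum>s\<in>{s\<in>Sf n. s n = 1}. wt Q p n s) * Q 1 j"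
    by (simp add: sum_distrib_right cong: sum.cong_simp)
  also have "\<dots> = p 0 * Q 0 j + p 1 * Q 1 j" using step.IH[of 0] step.IH[of 1] by simp
  also have "\<dots> = p j" using p step.prems by (auto simp: invariant2_def)
  finally show ?case .
qed


lemma marginal:
  assumes law: "hmm_law M \<mu> Q p f \<theta> X" and p: "invariant2 Q p"
    and one: "\<And>k. k \<in> {0,1} \<Longrightarrow> (LINT x:UNIV|\<mu>. f k x) = 1"
    and n: "n \<ge> 1" and B: "B \<in> sets borel"
  shows "measure M {\<omega>\<in>space M. (\<forall>i\<in>{1..n}. \<theta> i \<omega> \<in> {0,1}) \<and> X n \<omega> \<in> B}
     = p 0 * (LINT x:B|\<mu>. f 0 x) + p 1 * (LINT x:B|\<mu>. f 1 x)"
proof -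
  interpret prob_space M using law by (simp add: hmm_law_def)
  have thm_: "\<And>i. \<theta> i \<in> measurable M (count_space UNIV)" and Xm: "\<And>i. X i \<in> borel_measurable M"
    using law by (auto simp: hmm_law_def)
  define A where "A i = (if i = n then B else UNIV)" for i
  have A: "\<And>i. A i \<in> sets borel" using B by (simp add: A_def)
  define E where "E s = {\<omega>\<in>space M. \<forall>i\<in>{1..n}. \<theta> i \<omega> = s i \<and> X i \<omega> \<in> A i}" for s
  have Em: "E s \<in> sets M" for s
  proof -
    have "\<And>i. {\<omega>\<in>space M. \<theta> i \<omega> = s i \<and> X i \<omega> \<in> A i} \<in> sets M"
    proof -
      fix i
      have "{\<omega>\<in>space M. \<theta> i \<omega> = s i} \<in> sets M"
        using thm_[of i] by measurable
      moreover have "{\<omega>\<in>space M. X i \<omega> \<in> A i} \<in> sets M"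
        using Xm[of i] A[of i] by measurable
      ultimately show "{\<omega>\<in>space M. \<theta> i \<omega> = s i \<and> X i \<omega> \<in> A i} \<in> sets M"
        by (auto dest: sets.Int simp: Collect_conj_eq[symmetric] Int_def)
    qed
    then show ?thesis unfolding E_def
      by (intro sets.sets_Collect_finite_All) auto
  qed
  have eq: "{\<omega>\<in>space M. (\<forall>i\<in>{1..n}. \<theta> i \<omega> \<in> {0,1}) \<and> X n \<omega> \<in> B} = (\<Union>s\<in>Sf n. E s)"
  proof
    show "{\<omega>\<in>space M. (\<forall>i\<in>{1..n}. \<theta> i \<omega> \<in> {0,1}) \<and> X n \<omega> \<in> B} \<subseteq> (\<Union>s\<in>Sf n. E s)"
    proof
      fix \<omega> assume w: "\<omega> \<in> {\<omega>\<in>space M. (\<forall>i\<in>{1..n}. \<theta> i \<omega> \<in> {0,1}) \<and> X n \<omega> \<in> B}"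
      define s where "s i = (if i \<in> {1..n} then \<theta> i \<omega> else 0)" for i
      have "s \<in> Sf n" using w by (intro SfI) (auto simp: s_def)
      moreover have "\<omega> \<in> E s" using w by (auto simp: E_def s_def A_def)
      ultimately show "\<omega> \<in> (\<Union>s\<in>Sf n. E s)" by blast
    qed
    show "(\<Union>s\<in>Sf n. E s) \<subseteq> {\<omega>\<in>space M. (\<forall>i\<in>{1..n}. \<theta> i \<omega> \<in> {0,1}) \<and> X n \<omega> \<in> B}"
    proof (rule subsetI)
      fix \<omega> assume "\<omega> \<in> (\<Union>s\<in>Sf n. E s)"
      then obtain s where s: "s \<in> Sf n" "\<omega> \<in> E s" by blast
      then have w: "\<omega> \<in> space M" "\<And>i. i \<in> {1..n} \<Longrightarrow> \<theta> i \<omega> = s i \<and> X i \<omega> \<in> A i"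
        unfolding E_def by blast+
      have "\<theta> i \<omega> \<in> {0,1}" if i: "i \<in> {1..n}" for i
      proof -
        have "s i \<in> {0,1}" using s(1) i by (rule SfD1)
        then show ?thesis using w(2)[OF i] by simp
      qed
      moreover have "X n \<omega> \<in> B" using w(2)[of n] n unfolding A_def by simp
      ultimately show "\<omega> \<in> {\<omega>\<in>space M. (\<forall>i\<in>{1..n}. \<theta> i \<omega> \<in> {0,1}) \<and> X n \<omega> \<in> B}"
        using w(1) by blast
    qed
  qed
  have disj: "disjoint_family_on E (Sf n)"
    unfolding disjoint_family_on_def
  proof (intro ballI impI)
    fix s t assume st: "s \<in> Sf n" "t \<in> Sf n" "s \<noteq> t"
    then obtain i where "s i \<noteq> t i" by auto
    with st have "i \<in> {1..n}" using SfD2[of s n i] SfD2[of t n i] by auto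
    then show "E s \<inter> E t = {}" using \<open>s i \<noteq> t i\<close> by (auto simp: E_def)
  qed
  have mE: "measure M (E s) = wt Q p n s * (LINT x:B|\<mu>. f (s n) x)" if s: "s \<in> Sf n" for s
  proof -
    have "measure M (E s) = p (s 1) * (\<Prod>i\<in>{1..<n}. Q (s i) (s (Suc i))) * (\<Prod>i\<in>{1..n}. (LINT x:A i|\<mu>. f (s i) x))"
    proof -
      have L: "\<forall>n\<ge>1. \<forall>s A. (\<forall>i\<in>{1..n}. s i \<in> {0,1} \<and> A i \<in> sets borel) \<longrightarrow>
          measure M {\<omega> \<in> space M. \<forall>i\<in>{1..n}. \<theta> i \<omega> = s i \<and> X i \<omega> \<in> A i}
          = p (s 1) * (\<Prod>i\<in>{1..<n}. Q (s i) (s (Suc i)))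
              * (\<Prod>i\<in>{1..n}. (LINT x:A i|\<mu>. f (s i) x))" using law unfolding hmm_law_def by blast
      have "\<forall>i\<in>{1..n}. s i \<in> {0,1} \<and> A i \<in> sets borel" using s A SfD1[OF s] by blast
      then show ?thesis unfolding E_def using L n by blast
    qed
    also have "(\<Prod>i\<in>{1..n}. (LINT x:A i|\<mu>. f (s i) x)) = (\<Prod>i\<in>{1..<n}. (LINT x:A i|\<mu>. f (s i) x)) * (LINT x:A n|\<mu>. f (s n) x)"
    proof -
      have "{1..n} = insert n {1..<n}" using n by auto
      then show ?thesis by (simp add: mult.commute)
    qed
    also have "(\<Prod>i\<in>{1..<n}. (LINT x:A i|\<mu>. f (s i) x)) = 1"
    proof (rule prod.neutral, rule ballI)
      fix i assume i: "i \<in> {1..<n}"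
      then have "s i \<in> {0,1}" "A i = UNIV" using SfD1[OF s, of i] unfolding A_def by auto
      then show "(LINT x:A i|\<mu>. f (s i) x) = 1" using one by simp
    qed
    finally show ?thesis by (simp add: wt_def A_def)
  qed
  have "measure M {\<omega>\<in>space M. (\<forall>i\<in>{1..n}. \<theta> i \<omega> \<in> {0,1}) \<and> X n \<omega> \<in> B} = (\<Sum>s\<in>Sf n. measure M (E s))"
    unfolding eq using finite_Sf Em disj by (intro finite_measure_finite_Union) auto
  also have "\<dots> = (\<Sum>s\<in>Sf n. wt Q p n s * (LINT x:B|\<mu>. f (s n) x))"
    by (rule sum.cong) (auto simp: mE)
  also have "\<dots> = (\<Sum>s\<in>{s\<in>Sf n. s n = 0}. wt Q p n s * (LINT x:B|\<mu>. f (s n) x)) + (\<Sum>s\<in>{s\<in>Sf n. s n = 1}. wt Q p n s * (LINT x:B|\<mu>. f (s n) x))"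
    by (rule Sf_split[OF n])
  also have "\<dots> = (\<Sum>s\<in>{s\<in>Sf n. s n = 0}. wt Q p n s) * (LINT x:B|\<mu>. f 0 x) + (\<Sum>s\<in>{s\<in>Sf n. s n = 1}. wt Q p n s) * (LINT x:B|\<mu>. f 1 x)"
    by (simp add: sum_distrib_right cong: sum.cong_simp)
  also have "\<dots> = p 0 * (LINT x:B|\<mu>. f 0 x) + p 1 * (LINT x:B|\<mu>. f 1 x)"
    using chain[OF p n, of 0] chain[OF p n, of 1] by simp
  finally show ?thesis .
qed



lemma sets_base: "sets (base_measure disc) = sets borel"
  by (simp add: base_measure_def zcount_def)

lemma meas_base: "g \<in> borel_measurable borel \<Longrightarrow> g \<in> borel_measurable (base_measure disc)"
  by (simp only: measurable_cong_sets[OF sets_base[of disc] refl])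

lemma Icc_meas:
  assumes T: "0 \<le> T"
  shows "emeasure (base_measure disc) {-T..T} \<le> ennreal (2*T+1)"
proof (cases disc)
  case False
  then show ?thesis using T by (simp add: base_measure_def)
next
  case True
  have pre: "real_of_int -` {-T..T} = {\<lceil>-T\<rceil>..\<lfloor>T\<rfloor>}"
    by (auto simp: le_floor_iff ceiling_le_iff)
  have "emeasure zcount {-T..T} = emeasure (count_space UNIV) (real_of_int -` {-T..T})"
    unfolding zcount_def by (subst emeasure_distr) auto
  also have "\<dots> = ennreal (real (nat (\<lfloor>T\<rfloor> - \<lceil>-T\<rceil> + 1)))"
    unfolding pre by (simp add: ennreal_of_nat_eq_real_of_nat)
  also have "\<dots> \<le> ennreal (2*T+1)"
  proof (rule ennreal_leI)
    have "real_of_int \<lfloor>T\<rfloor> \<le> T" "-T \<le> real_of_int \<lceil>-T\<rceil>" by linarith+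
    moreover have "\<lceil>-T\<rceil> \<le> \<lfloor>T\<rfloor> + 1" using T by linarith
    ultimately show "real (nat (\<lfloor>T\<rfloor> - \<lceil>-T\<rceil> + 1)) \<le> 2*T+1" by linarith
  qed
  finally show ?thesis using True by (simp add: base_measure_def)
qed

lemma ptwise:
  fixes c T \<nu> y x :: real
  assumes c: "c > 0" and T: "T > 0" and nu: "\<nu> > 0" and y: "0 \<le> y" and that: "g x = y"
  shows "indicator {z. c < 1 / g z} x * y \<le> 1/c * indicator {-T..T} x + T powr (-\<nu>) * (\<bar>x\<bar> powr \<nu> * y)"
proof (cases "c < 1 / y")
  case False
  then show ?thesis using that T y c by (simp add: indicator_def add_nonneg_nonneg)
next
  case True
  then have ypos: "y > 0" using c y by (cases "y = 0") auto
  then have ylt: "y < 1/c" using True c by (simp add: field_simps)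
  have sec: "0 \<le> T powr (-\<nu>) * (\<bar>x\<bar> powr \<nu> * y)" using y by simp
  show ?thesis
  proof (cases "\<bar>x\<bar> \<le> T")
    case True
    then have "x \<in> {-T..T}" by auto
    then show ?thesis using ylt sec \<open>c < 1/y\<close> that by (simp add: indicator_def)
  next
    case False
    then have "T powr \<nu> \<le> \<bar>x\<bar> powr \<nu>" using T nu by (intro powr_mono2) auto
    moreover have tp: "T powr \<nu> > 0" using T by simp
    moreover have "T powr (-\<nu>) * \<bar>x\<bar> powr \<nu> = \<bar>x\<bar> powr \<nu> / T powr \<nu>"
      by (simp add: powr_minus divide_inverse mult.commute)
    ultimately have k1: "1 \<le> T powr (-\<nu>) * \<bar>x\<bar> powr \<nu>" by simp
    have "1 * y \<le> (T powr (-\<nu>) * \<bar>x\<bar> powr \<nu>) * y"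
      by (rule mult_right_mono[OF k1]) (use ypos in simp)
    then have "y \<le> T powr (-\<nu>) * (\<bar>x\<bar> powr \<nu> * y)" by (simp only: mult.assoc mult_1)
    then show ?thesis using \<open>c < 1/y\<close> that c False by (auto simp: indicator_def abs_le_iff)
  qed
qed

lemma dens_int:
  assumes "is_density (base_measure disc) g"
  shows "integrable (base_measure disc) g" "integral\<^sup>L (base_measure disc) g = 1"
proof -
  have m: "g \<in> borel_measurable (base_measure disc)" and nn: "\<And>x. 0 \<le> g x"
    and one: "(\<integral>\<^sup>+ x. ennreal (g x) \<partial>base_measure disc) = 1"
    using assms meas_base by (auto simp: is_density_def)
  show "integrable (base_measure disc) g"
    by (rule integrableI_nonneg) (use m nn one in auto)
  show "integral\<^sup>L (base_measure disc) g = 1"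
    by (subst integral_eq_nn_integral) (use m nn one in auto)
qed



lemma upper:
  assumes law: "hmm_law M \<mu> Q p f \<theta> X" and p: "invariant2 Q p"
    and one: "\<And>k. k \<in> {0,1} \<Longrightarrow> (LINT x:UNIV|\<mu>. f k x) = 1"
    and n: "n \<ge> 1" and B: "B \<in> sets borel"
  shows "measure M {\<omega>\<in>space M. X n \<omega> \<in> B}
     \<le> p 0 * (LINT x:B|\<mu>. f 0 x) + p 1 * (LINT x:B|\<mu>. f 1 x)"
proof -
  interpret prob_space M using law by (simp add: hmm_law_def)
  have thm_: "\<And>i. \<theta> i \<in> measurable M (count_space UNIV)" and Xm: "\<And>i. X i \<in> borel_measurable M"
    using law by (auto simp: hmm_law_def)
  define G where "G = {\<omega>\<in>space M. \<forall>i\<in>{1..n}. \<theta> i \<omega> \<in> {0,1}}"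
  have Gm: "G \<in> sets M" unfolding G_def
  proof (rule sets.sets_Collect_finite_All)
    fix i
    have "{\<omega>\<in>space M. \<theta> i \<omega> \<in> {0,1}} = \<theta> i -` {0,1} \<inter> space M" by auto
    also have "\<dots> \<in> sets M" by (rule measurable_sets[OF thm_]) simp
    finally show "{\<omega>\<in>space M. \<theta> i \<omega> \<in> {0,1}} \<in> sets M" .
  qed simp
  have XBm: "{\<omega>\<in>space M. X n \<omega> \<in> B} \<in> sets M"
  proof -
    have "{\<omega>\<in>space M. X n \<omega> \<in> B} = X n -` B \<inter> space M" by auto
    also have "\<dots> \<in> sets M" by (rule measurable_sets[OF Xm B])
    finally show ?thesis .
  qed
  have "measure M {\<omega>\<in>space M. (\<forall>i\<in>{1..n}. \<theta> i \<omega> \<in> {0,1}) \<and> X n \<omega> \<in> UNIV}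
     = p 0 * (LINT x:UNIV|\<mu>. f 0 x) + p 1 * (LINT x:UNIV|\<mu>. f 1 x)"
    by (rule marginal[OF law p one n]) auto
  also have "\<dots> = 1" using one[of 0] one[of 1] p by (simp add: invariant2_def)
  finally have PG: "prob G = 1" unfolding G_def by simp
  have sub: "{\<omega>\<in>space M. X n \<omega> \<in> B} \<subseteq> (G \<inter> {\<omega>\<in>space M. X n \<omega> \<in> B}) \<union> (space M - G)"
    by auto
  have "measure M {\<omega>\<in>space M. X n \<omega> \<in> B} \<le> measure M ((G \<inter> {\<omega>\<in>space M. X n \<omega> \<in> B}) \<union> (space M - G))"
    by (rule finite_measure_mono[OF sub]) (use Gm XBm in auto)
  also have "\<dots> \<le> measure M (G \<inter> {\<omega>\<in>space M. X n \<omega> \<in> B}) + measure M (space M - G)"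
    by (rule measure_subadditive) (use Gm XBm in auto)
  also have "measure M (space M - G) = 0" using prob_compl[OF Gm] PG by simp
  also have "G \<inter> {\<omega>\<in>space M. X n \<omega> \<in> B} = {\<omega>\<in>space M. (\<forall>i\<in>{1..n}. \<theta> i \<omega> \<in> {0,1}) \<and> X n \<omega> \<in> B}"
    unfolding G_def by auto
  also have "measure M \<dots> = p 0 * (LINT x:B|\<mu>. f 0 x) + p 1 * (LINT x:B|\<mu>. f 1 x)"
    by (rule marginal[OF law p one n B])
  finally show ?thesis by simp
qed



lemma powr_h1:
  fixes x a b :: real assumes x: "x > 0"
  shows "x * (1 / x powr a) * x powr b = x powr (1 - a + b)"
proof -
  have "x powr (1 - a + b) = x powr ((1 + b) - a)" by (simp add: algebra_simps)
  also have "\<dots> = x powr 1 * x powr b / x powr a" by (simp only: powr_diff powr_add)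
  also have "\<dots> = x * x powr b / x powr a" using x by simp
  finally show ?thesis by simp
qed

lemma powr_h2:
  fixes x a :: real assumes x: "x > 0"
  shows "x * (1 / x powr a) = x powr (1 - a)"
proof -
  have "x powr (1 - a) = x powr 1 / x powr a" by (simp only: powr_diff)
  then show ?thesis using x by simp
qed

lemma powr_h3:
  fixes x b \<nu> :: real assumes x: "x > 0"
  shows "x * (x powr b) powr (-\<nu>) = x powr (1 - b * \<nu>)"
proof -
  have "x powr (1 - b * \<nu>) = x powr 1 / x powr (b * \<nu>)" by (simp only: powr_diff)
  moreover have "(x powr b) powr (-\<nu>) = inverse (x powr (b * \<nu>))" by (simp add: powr_powr powr_minus)
  ultimately show ?thesis using x by (simp add: divide_inverse)
qed

lemma lim_powr_neg: "e < 0 \<Longrightarrow> ((\<lambda>R::nat. real R powr e) \<longlongrightarrow> 0) sequentially"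
  by (rule tendsto_neg_powr[OF _ filterlim_real_sequentially])

theorem lemma12:
  fixes M :: "'w measure" and disc :: bool
    and Q :: "nat \<Rightarrow> nat \<Rightarrow> real" and p :: "nat \<Rightarrow> real"
    and f :: "nat \<Rightarrow> real \<Rightarrow> real"
    and \<theta> :: "nat \<Rightarrow> 'w \<Rightarrow> nat" and X :: "nat \<Rightarrow> 'w \<Rightarrow> real"
    and \<nu> a :: real
  assumes Q: "stoch2 Q"
    and p: "invariant2 Q p"
    and dens: "is_density (base_measure disc) (f 0)" "is_density (base_measure disc) (f 1)"
    and law: "hmm_law M (base_measure disc) Q p f \<theta> X"
    and nu_pos: "\<nu> > 0"
    and A1_i: "\<forall>j\<in>{0,1}. (\<integral>\<^sup>+ x. ennreal (\<bar>x\<bar> powr \<nu> * f j x) \<partial>base_measure disc) < \<infinity>"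
    and A1_ii: "A1_ii disc (f 0) (f 1)"
    and a: "a > 1 + 1 / \<nu>"
  shows "((\<lambda>R::nat. measure M {\<omega> \<in> space M.
            Max ((\<lambda>i. 1 / (p 0 * f 0 (X i \<omega>) + p 1 * f 1 (X i \<omega>))) ` {1..R}) > real R powr a})
          \<longlongrightarrow> 0) sequentially"
proof -
  interpret P: prob_space M using law by (simp add: hmm_law_def)
  have Xm: "\<And>i. X i \<in> borel_measurable M" using law by (auto simp: hmm_law_def)
  have p0: "p 0 \<ge> 0" and p1: "p 1 \<ge> 0" using p by (auto simp: invariant2_def)
  define Fp where "Fp x = p 0 * f 0 x + p 1 * f 1 x" for x
  have fm0[measurable]: "f 0 \<in> borel_measurable borel" and fm1[measurable]: "f 1 \<in> borel_measurable borel"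
    using dens by (auto simp: is_density_def)
  have fnn: "\<And>x. f 0 x \<ge> 0" "\<And>x. f 1 x \<ge> 0" using dens by (auto simp: is_density_def)
  have Fpm[measurable]: "Fp \<in> borel_measurable borel" unfolding Fp_def by measurable
  have Fpnn: "\<And>x. Fp x \<ge> 0" unfolding Fp_def using p0 p1 fnn by simp
  have int0: "integrable (base_measure disc) (f 0)" and int1: "integrable (base_measure disc) (f 1)"
    using dens_int dens by blast+
  have one: "(LINT x:UNIV|base_measure disc. f k x) = 1" if "k \<in> {0,1}" for k
  proof -
    have "(LINT x:UNIV|base_measure disc. f k x) = integral\<^sup>L (base_measure disc) (f k)"
      unfolding set_lebesgue_integral_def by simp
    then show ?thesis using that dens_int dens by auto
  qed
  have Fpint: "integrable (base_measure disc) Fp"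
    using int0 int1 unfolding Fp_def by auto
  have mom: "integrable (base_measure disc) (\<lambda>x. \<bar>x\<bar> powr \<nu> * f k x)" if k: "k \<in> {0,1}" for k
  proof (rule integrableI_nonneg)
    have "f k \<in> borel_measurable borel" using k fm0 fm1 by (cases "k = 0") auto
    then have "(\<lambda>x. \<bar>x\<bar> powr \<nu> * f k x) \<in> borel_measurable borel" by measurable
    then show "(\<lambda>x. \<bar>x\<bar> powr \<nu> * f k x) \<in> borel_measurable (base_measure disc)" by (rule meas_base)
    show "AE x in base_measure disc. 0 \<le> \<bar>x\<bar> powr \<nu> * f k x" using k fnn by (cases "k = 0") auto
    show "(\<integral>\<^sup>+ x. ennreal (\<bar>x\<bar> powr \<nu> * f k x) \<partial>base_measure disc) < \<infinity>" using A1_i k by (cases "k = 0") auto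
  qed
  have Cint: "integrable (base_measure disc) (\<lambda>x. \<bar>x\<bar> powr \<nu> * Fp x)"
  proof -
    have "integrable (base_measure disc) (\<lambda>x. p 0 * (\<bar>x\<bar> powr \<nu> * f 0 x) + p 1 * (\<bar>x\<bar> powr \<nu> * f 1 x))"
      using mom[of 0] mom[of 1] by auto
    moreover have "(\<lambda>x. p 0 * (\<bar>x\<bar> powr \<nu> * f 0 x) + p 1 * (\<bar>x\<bar> powr \<nu> * f 1 x)) = (\<lambda>x. \<bar>x\<bar> powr \<nu> * Fp x)"
      by (auto simp: Fp_def algebra_simps)
    ultimately show ?thesis by simp
  qed
  define C where "C = integral\<^sup>L (base_measure disc) (\<lambda>x. \<bar>x\<bar> powr \<nu> * Fp x)"
  have C0: "C \<ge> 0" unfolding C_def using Fpnn by (intro integral_nonneg_AE) auto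
  have key: "measure M {\<omega>\<in>space M. X n \<omega> \<in> {x. c < 1 / Fp x}} \<le> 1/c * (2*T+1) + T powr (-\<nu>) * C"
    if c: "c > 0" and T: "T > 0" and n: "n \<ge> 1" for c T n
  proof -
    define B where "B = {x. c < 1 / Fp x}"
    have Bm: "B \<in> sets borel" unfolding B_def by measurable
    have Bm': "B \<in> sets (base_measure disc)" using Bm sets_base by simp
    have Im: "{-T..T} \<in> sets (base_measure disc)" using sets_base by simp
    have Ifin: "emeasure (base_measure disc) {-T..T} < \<infinity>"
      using Icc_meas[of T disc] T by (simp add: le_less_trans)
    have "measure M {\<omega>\<in>space M. X n \<omega> \<in> B} \<le> p 0 * (LINT x:B|base_measure disc. f 0 x) + p 1 * (LINT x:B|base_measure disc. f 1 x)"
      by (rule upper[OF law p one n Bm])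
    also have "\<dots> = integral\<^sup>L (base_measure disc) (\<lambda>x. indicator B x * Fp x)"
    proof -
      have i0: "integrable (base_measure disc) (\<lambda>x. indicator B x * f 0 x)"
        using integrable_mult_indicator[OF Bm' int0] by simp
      have i1: "integrable (base_measure disc) (\<lambda>x. indicator B x * f 1 x)"
        using integrable_mult_indicator[OF Bm' int1] by simp
      have "(\<lambda>x. indicator B x * Fp x) = (\<lambda>x. p 0 * (indicator B x * f 0 x) + p 1 * (indicator B x * f 1 x))"
        by (auto simp: Fp_def algebra_simps)
      then have "integral\<^sup>L (base_measure disc) (\<lambda>x. indicator B x * Fp x)
         = p 0 * integral\<^sup>L (base_measure disc) (\<lambda>x. indicator B x * f 0 x) + p 1 * integral\<^sup>L (base_measure disc) (\<lambda>x. indicator B x * f 1 x)"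
        using i0 i1 by simp
      then show ?thesis unfolding set_lebesgue_integral_def by simp
    qed
    also have "\<dots> \<le> integral\<^sup>L (base_measure disc) (\<lambda>x. 1/c * indicator {-T..T} x + T powr (-\<nu>) * (\<bar>x\<bar> powr \<nu> * Fp x))"
    proof (rule integral_mono)
      show "integrable (base_measure disc) (\<lambda>x. indicator B x * Fp x)"
        using integrable_mult_indicator[OF Bm' Fpint] by simp
      show "integrable (base_measure disc) (\<lambda>x. 1/c * indicator {-T..T} x + T powr (-\<nu>) * (\<bar>x\<bar> powr \<nu> * Fp x))"
        using Im Ifin Cint by auto
      fix x show "indicator B x * Fp x \<le> 1/c * indicator {-T..T} x + T powr (-\<nu>) * (\<bar>x\<bar> powr \<nu> * Fp x)"
        unfolding B_def by (rule ptwise[where g=Fp and x=x and y="Fp x", OF c T nu_pos Fpnn[of x] refl])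
    qed
    also have "\<dots> = 1/c * measure (base_measure disc) {-T..T} + T powr (-\<nu>) * C"
    proof -
      have sp: "space (base_measure disc) = UNIV"
        using sets_eq_imp_space_eq[OF sets_base[of disc]] by simp
      have ia: "integrable (base_measure disc) (\<lambda>x. 1/c * indicator {-T..T} x)" using Im Ifin by auto
      have ib: "integrable (base_measure disc) (\<lambda>x. T powr (-\<nu>) * (\<bar>x\<bar> powr \<nu> * Fp x))" using Cint by auto
      have "integral\<^sup>L (base_measure disc) (\<lambda>x. 1/c * indicator {-T..T} x + T powr (-\<nu>) * (\<bar>x\<bar> powr \<nu> * Fp x))
        = integral\<^sup>L (base_measure disc) (\<lambda>x. 1/c * indicator {-T..T} x) + integral\<^sup>L (base_measure disc) (\<lambda>x. T powr (-\<nu>) * (\<bar>x\<bar> powr \<nu> * Fp x))"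
        by (rule Bochner_Integration.integral_add[OF ia ib])
      also have "integral\<^sup>L (base_measure disc) (\<lambda>x. 1/c * indicator {-T..T} x) = 1/c * measure (base_measure disc) {-T..T}"
        using Im Ifin sp by simp
      also have "integral\<^sup>L (base_measure disc) (\<lambda>x. T powr (-\<nu>) * (\<bar>x\<bar> powr \<nu> * Fp x)) = T powr (-\<nu>) * C"
        unfolding C_def using Cint by simp
      finally show ?thesis .
    qed
    also have "\<dots> \<le> 1/c * (2*T+1) + T powr (-\<nu>) * C"
    proof -
      have "measure (base_measure disc) {-T..T} \<le> 2*T+1"
        using Icc_meas[of T disc] T Ifin by (simp add: measure_def enn2real_leI)
      then show ?thesis using c by (simp add: divide_right_mono)
    qed
    finally show ?thesis unfolding B_def .
  qed
  define b where "b = (1/\<nu> + (a - 1)) / 2"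
  have nuinv: "1/\<nu> > 0" using nu_pos by simp
  have bnu: "b * \<nu> > 1"
  proof -
    have "b > 1/\<nu>" using a unfolding b_def by simp
    then have "b * \<nu> > (1/\<nu>) * \<nu>" using nu_pos by (rule mult_strict_right_mono)
    then show ?thesis using nu_pos by simp
  qed
  have ba: "b < a - 1" using a unfolding b_def by simp
  define bnd where "bnd R = 2 * real R powr (1 - a + b) + real R powr (1 - a) + C * real R powr (1 - b*\<nu>)" for R :: nat
  have le: "measure M {\<omega> \<in> space M.
            Max ((\<lambda>i. 1 / (p 0 * f 0 (X i \<omega>) + p 1 * f 1 (X i \<omega>))) ` {1..R}) > real R powr a} \<le> bnd R"
    if R: "R \<ge> 1" for R
  proof -
    define x where "x = real R"
    have x: "x > 0" using R unfolding x_def by simp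
    define c where "c = x powr a"
    define T where "T = x powr b"
    have c: "c > 0" and T: "T > 0" using x unfolding c_def T_def by simp_all
    define Bs where "Bs i = {\<omega>\<in>space M. X i \<omega> \<in> {x. c < 1 / Fp x}}" for i
    have Bsm: "Bs i \<in> sets M" for i
    proof -
      have S: "{x. c < 1 / Fp x} \<in> sets borel" by measurable
      have "Bs i = X i -` {x. c < 1 / Fp x} \<inter> space M" unfolding Bs_def by auto
      then show ?thesis using measurable_sets[OF Xm S] by simp
    qed
    have sub: "{\<omega> \<in> space M.
            Max ((\<lambda>i. 1 / (p 0 * f 0 (X i \<omega>) + p 1 * f 1 (X i \<omega>))) ` {1..R}) > real R powr a}
          \<subseteq> (\<Union>i\<in>{1..R}. Bs i)"
    proof (rule subsetI)
      fix \<omega> assume w: "\<omega> \<in> {\<omega> \<in> space M.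
            Max ((\<lambda>i. 1 / (p 0 * f 0 (X i \<omega>) + p 1 * f 1 (X i \<omega>))) ` {1..R}) > real R powr a}"
      then have ws: "\<omega> \<in> space M"
        and wm: "c < Max ((\<lambda>i. 1 / (p 0 * f 0 (X i \<omega>) + p 1 * f 1 (X i \<omega>))) ` {1..R})"
        unfolding c_def x_def by auto
      have ne: "(\<lambda>i. 1 / (p 0 * f 0 (X i \<omega>) + p 1 * f 1 (X i \<omega>))) ` {1..R} \<noteq> {}" using R by auto
      obtain i where i: "i \<in> {1..R}" and ci: "c < 1 / (p 0 * f 0 (X i \<omega>) + p 1 * f 1 (X i \<omega>))"
        using wm Max_gr_iff[OF finite_imageI[OF finite_atLeastAtMost] ne] by auto
      have "\<omega> \<in> Bs i" unfolding Bs_def using ws ci by (simp add: Fp_def)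
      then show "\<omega> \<in> (\<Union>i\<in>{1..R}. Bs i)" using i by blast
    qed
    have "measure M {\<omega> \<in> space M.
            Max ((\<lambda>i. 1 / (p 0 * f 0 (X i \<omega>) + p 1 * f 1 (X i \<omega>))) ` {1..R}) > real R powr a}
          \<le> measure M (\<Union>i\<in>{1..R}. Bs i)"
      by (rule P.finite_measure_mono[OF sub]) (use Bsm in auto)
    also have "\<dots> \<le> (\<Sum>i\<in>{1..R}. measure M (Bs i))"
      by (rule measure_UNION_le) (use Bsm in auto)
    also have "\<dots> \<le> (\<Sum>i\<in>{1..R}. 1/c * (2*T+1) + T powr (-\<nu>) * C)"
      by (rule sum_mono) (unfold Bs_def, rule key[OF c T], auto)
    also have "\<dots> = x * (1/c * (2*T+1) + T powr (-\<nu>) * C)" unfolding x_def by simp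
    also have "\<dots> = 2 * (x * (1 / x powr a) * x powr b) + x * (1 / x powr a) + C * (x * (x powr b) powr (-\<nu>))"
      unfolding c_def T_def by (simp add: algebra_simps)
    also have "\<dots> = bnd R" unfolding bnd_def x_def[symmetric]
      using x by (simp only: powr_h1 powr_h2 powr_h3 powr_add[symmetric])
    finally show ?thesis .
  qed
  have lim: "bnd \<longlonglongrightarrow> 0"
  proof -
    have l1: "((\<lambda>R::nat. real R powr (1 - a + b)) \<longlongrightarrow> 0) sequentially" using ba by (intro lim_powr_neg) simp
    have l2: "((\<lambda>R::nat. real R powr (1 - a)) \<longlongrightarrow> 0) sequentially" using a nuinv by (intro lim_powr_neg) linarith
    have l3: "((\<lambda>R::nat. real R powr (1 - b*\<nu>)) \<longlongrightarrow> 0) sequentially" using bnu by (intro lim_powr_neg) simp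
    have "((\<lambda>R. 2 * real R powr (1 - a + b) + real R powr (1 - a) + C * real R powr (1 - b*\<nu>)) \<longlongrightarrow> 2 * 0 + 0 + C * 0) sequentially"
      by (intro tendsto_add tendsto_mult tendsto_const l1 l2 l3)
    then show ?thesis unfolding bnd_def[abs_def] by simp
  qed
  show ?thesis
  proof (rule tendsto_sandwich[OF _ _ tendsto_const lim])
    show "\<forall>\<^sub>F R in sequentially. 0 \<le> measure M {\<omega> \<in> space M.
            Max ((\<lambda>i. 1 / (p 0 * f 0 (X i \<omega>) + p 1 * f 1 (X i \<omega>))) ` {1..R}) > real R powr a}"
      by simp
    show "\<forall>\<^sub>F R in sequentially. measure M {\<omega> \<in> space M.
            Max ((\<lambda>i. 1 / (p 0 * f 0 (X i \<omega>) + p 1 * f 1 (X i \<omega>))) ` {1..R}) > real R powr a} \<le> bnd R"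
      using le by (intro eventually_sequentiallyI[of 1]) auto
  qed
qed


end
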